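(* Let $n\geq2$. Then there exist matrices $u,v,w\in[M_n(\mathbb{Z}),M_n(\mathbb{Z})]_1$ such that $[u,v]$ is invertible in $M_n(\mathbb{Z})$ and $v=vw$.
   Context: $[x,y]=xy-yx$, and $[M_n(\mathbb{Z}),M_n(\mathbb{Z})]_1=\{[x,y]:x,y\in M_n(\mathbb{Z})\}$ is the set of commutators in the ring of $n\times n$ integer matrices. *)

theory Defs
  imports "HOL-Analysis.Analysis"
begin

definition mat_commutator :: "int^'n^'n \<Rightarrow> int^'n^'n \<Rightarrow> int^'n^'n" where
  "mat_commutator x y = x ** y - y ** x"

definition commutators1 :: "(int^'n^'n) set" where
  "commutators1 = {mat_commutator x y | x y. True}"

end

theory Submission
  imports Defs
begin


type_synonym nm = "nat \<Rightarrow> nat \<Rightarrow> int"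

definition mm :: "nat \<Rightarrow> nm \<Rightarrow> nm \<Rightarrow> nm" where
  "mm n A B = (\<lambda>i j. if i < n \<and> j < n then (\<Sum>k<n. A i k * B k j) else 0)"

definition idm :: "nat \<Rightarrow> nm" where
  "idm n = (\<lambda>i j. if i < n \<and> i = j then 1 else 0)"

definition cm :: "nat \<Rightarrow> nm \<Rightarrow> nm \<Rightarrow> nm" where
  "cm n x y = (\<lambda>i j. mm n x y i j - mm n y x i j)"

definition good :: "nat \<Rightarrow> nm \<Rightarrow> nm \<Rightarrow> nm \<Rightarrow> bool" where
  "good n u v w \<longleftrightarrow> (\<exists>x y. u = cm n x y) \<and> (\<exists>x y. v = cm n x y) \<and> (\<exists>x y. w = cm n x y)
     \<and> (\<exists>Y. mm n (cm n u v) Y = idm n \<and> mm n Y (cm n u v) = idm n) \<and> v = mm n v w"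

definition blk :: "nat \<Rightarrow> nm \<Rightarrow> nm \<Rightarrow> nm" where
  "blk a A B = (\<lambda>i j. if i < a \<and> j < a then A i j else if a \<le> i \<and> a \<le> j then B (i - a) (j - a) else 0)"

lemma sum_split_add: "(\<Sum>k<a+(b::nat). f k) = (\<Sum>k<a. f k) + (\<Sum>k<b. f (a + k)::int)"
  by (induction b) (simp_all add: add.assoc)

lemma mm_blk: "mm (a+b) (blk a A B) (blk a C D) = blk a (mm a A C) (mm b B D)"
proof (intro ext)
  fix i j
  show "mm (a+b) (blk a A B) (blk a C D) i j = blk a (mm a A C) (mm b B D) i j"
  proof (cases "i < a+b \<and> j < a+b")
    case False thus ?thesis by (auto simp: mm_def blk_def)
  next
    case True
    then show ?thesis
      unfolding mm_def using True
      by (auto simp: sum_split_add blk_def intro!: sum.neutral)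
  qed
qed

lemma cm_blk: "cm (a+b) (blk a A B) (blk a C D) = blk a (cm a A C) (cm b B D)"
  unfolding cm_def mm_blk by (auto simp: blk_def fun_eq_iff)

lemma idm_blk: "idm (a+b) = blk a (idm a) (idm b)"
  by (auto simp: idm_def blk_def fun_eq_iff)

lemma good_add: "good a u1 v1 w1 \<Longrightarrow> good b u2 v2 w2 \<Longrightarrow> good (a+b) (blk a u1 u2) (blk a v1 v2) (blk a w1 w2)"
  unfolding good_def
  by (metis cm_blk mm_blk idm_blk)



definition ml :: "int list list \<Rightarrow> nm" where
  "ml L = (\<lambda>i j. if i < length L \<and> j < length L then L!i!j else 0)"

lemma lt2: "(i::nat) < 2 \<longleftrightarrow> i = 0 \<or> i = 1" by auto
lemma lt3: "(i::nat) < 3 \<longleftrightarrow> i = 0 \<or> i = 1 \<or> i = 2" by auto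
lemma s2: "{..<2::nat} = {0,1}" by auto
lemma s3: "{..<3::nat} = {0,1,2}" by auto

lemma mm2: "mm 2 A B i j = (if i < 2 \<and> j < 2 then A i 0 * B 0 j + A i 1 * B 1 j else 0)"
  unfolding mm_def s2 by simp
lemma mm3: "mm 3 A B i j = (if i < 3 \<and> j < 3 then A i 0 * B 0 j + A i 1 * B 1 j + A i 2 * B 2 j else 0)"
  unfolding mm_def s3 by (simp add: add.assoc)

lemma ext2: "(\<And>i j. i < 2 \<Longrightarrow> j < 2 \<Longrightarrow> F i j = G i j) \<Longrightarrow> (\<And>i j. \<not> (i < 2 \<and> j < 2) \<Longrightarrow> F i j = G i j) \<Longrightarrow> F = (G::nm)"
  by (auto simp: fun_eq_iff)

lemma ext3: "(\<And>i j. i < 3 \<Longrightarrow> j < 3 \<Longrightarrow> F i j = G i j) \<Longrightarrow> (\<And>i j. \<not> (i < 3 \<and> j < 3) \<Longrightarrow> F i j = G i j) \<Longrightarrow> F = (G::nm)"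
  by (auto simp: fun_eq_iff)

lemma good2: "good 2 (ml [[0,0],[1,0]]) (ml [[0,1],[0,0]]) (ml [[-1,0],[0,1]])"
proof -
  have c1: "ml [[0,0],[1,0]] = cm 2 (ml [[0,0],[1,0]]) (ml [[1,0],[0,0]])"
    by (rule ext2) (auto simp: cm_def mm2 lt2 ml_def)
  have c2: "ml [[0,1],[0,0]] = cm 2 (ml [[1,0],[0,0]]) (ml [[0,1],[0,0]])"
    by (rule ext2) (auto simp: cm_def mm2 lt2 ml_def)
  have c3: "ml [[-1,0],[0,1]] = cm 2 (ml [[0,0],[1,0]]) (ml [[0,1],[0,0]])"
    by (rule ext2) (auto simp: cm_def mm2 lt2 ml_def)
  have x: "cm 2 (ml [[0,0],[1,0]]) (ml [[0,1],[0,0]]) = ml [[-1,0],[0,1]]"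
    using c3 by simp
  have i: "mm 2 (ml [[-1,0],[0,1]]) (ml [[-1,0],[0,1]]) = idm 2"
    by (rule ext2) (auto simp: mm2 lt2 ml_def idm_def)
  have e: "ml [[0,1],[0,0]] = mm 2 (ml [[0,1],[0,0]]) (ml [[-1,0],[0,1]])"
    by (rule ext2) (auto simp: mm2 lt2 ml_def)
  show ?thesis unfolding good_def x using c1 c2 c3 i e by blast
qed

lemma good3: "good 3 (ml [[0,1,0],[0,0,0],[1,0,0]]) (ml [[0,1,0],[0,0,1],[0,0,0]]) (ml [[-2,0,0],[0,1,0],[0,0,1]])"
proof -
  have c1: "ml [[0,1,0],[0,0,0],[1,0,0]] = cm 3 (ml [[0,0,0],[0,1,0],[0,0,1]]) (ml [[0,-1,0],[0,0,0],[1,0,0]])"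
    by (rule ext3) (auto simp: cm_def mm3 lt3 ml_def)
  have c2: "ml [[0,1,0],[0,0,1],[0,0,0]] = cm 3 (ml [[0,1,0],[0,0,1],[0,0,0]]) (ml [[0,0,0],[0,1,0],[0,0,2]])"
    by (rule ext3) (auto simp: cm_def mm3 lt3 ml_def)
  have c3: "ml [[-2,0,0],[0,1,0],[0,0,1]] = cm 3 (ml [[0,0,0],[2,0,0],[0,1,0]]) (ml [[0,1,0],[0,0,1],[0,0,0]])"
    by (rule ext3) (auto simp: cm_def mm3 lt3 ml_def)
  have x: "cm 3 (ml [[0,1,0],[0,0,0],[1,0,0]]) (ml [[0,1,0],[0,0,1],[0,0,0]]) = ml [[0,0,1],[-1,0,0],[0,1,0]]"
    by (rule ext3) (auto simp: cm_def mm3 lt3 ml_def)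
  have i1: "mm 3 (ml [[0,0,1],[-1,0,0],[0,1,0]]) (ml [[0,-1,0],[0,0,1],[1,0,0]]) = idm 3"
    by (rule ext3) (auto simp: mm3 lt3 ml_def idm_def)
  have i2: "mm 3 (ml [[0,-1,0],[0,0,1],[1,0,0]]) (ml [[0,0,1],[-1,0,0],[0,1,0]]) = idm 3"
    by (rule ext3) (auto simp: mm3 lt3 ml_def idm_def)
  have e: "ml [[0,1,0],[0,0,1],[0,0,0]] = mm 3 (ml [[0,1,0],[0,0,1],[0,0,0]]) (ml [[-2,0,0],[0,1,0],[0,0,1]])"
    by (rule ext3) (auto simp: mm3 lt3 ml_def)
  show ?thesis unfolding good_def x using c1 c2 c3 i1 i2 e by blast
qed

lemma good_all: "n \<ge> 2 \<Longrightarrow> \<exists>u v w. good n u v w"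
proof (induction n rule: less_induct)
  case (less n)
  show ?case
  proof (cases "n = 2 \<or> n = 3")
    case True thus ?thesis using good2 good3 by blast
  next
    case False
    then have "n - 2 \<ge> 2" "n - 2 < n" using less.prems by auto
    then obtain u v w where "good (n-2) u v w" using less.IH by blast
    then have "good (2 + (n-2)) (blk 2 (ml [[0,0],[1,0]]) u) (blk 2 (ml [[0,1],[0,0]]) v) (blk 2 (ml [[-1,0],[0,1]]) w)"
      using good_add good2 by blast
    moreover have "2 + (n-2) = n" using False less.prems by auto
    ultimately show ?thesis by metis
  qed
qed



lemma tr_mult:
  fixes f :: "'n::finite \<Rightarrow> nat"
  assumes bij: "bij_betw f UNIV {..<CARD('n)}"
  shows "((\<chi> i j. A (f i) (f j)) :: int^'n^'n) ** (\<chi> i j. B (f i) (f j))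
        = (\<chi> i j. mm CARD('n) A B (f i) (f j))"
proof -
  have lt: "f i < CARD('n)" for i using bij_betw_apply[OF bij] by auto
  have "(\<Sum>k\<in>UNIV. A (f i) (f k) * B (f k) (f j)) = (\<Sum>k<CARD('n). A (f i) k * B k (f j))" for i j
    using sum.reindex_bij_betw[OF bij, of "\<lambda>k. A (f i) k * B k (f j)"] by simp
  then show ?thesis
    by (simp add: vec_eq_iff matrix_matrix_mult_def mm_def lt)
qed

lemma tr_cm:
  fixes f :: "'n::finite \<Rightarrow> nat"
  assumes bij: "bij_betw f UNIV {..<CARD('n)}"
  shows "mat_commutator ((\<chi> i j. A (f i) (f j)) :: int^'n^'n) (\<chi> i j. B (f i) (f j))
        = (\<chi> i j. cm CARD('n) A B (f i) (f j))"
  unfolding mat_commutator_def tr_mult[OF bij] by (simp add: vec_eq_iff cm_def)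

lemma tr_id:
  fixes f :: "'n::finite \<Rightarrow> nat"
  assumes bij: "bij_betw f UNIV {..<CARD('n)}"
  shows "((\<chi> i j. idm CARD('n) (f i) (f j)) :: int^'n^'n) = mat 1"
proof -
  have lt: "f i < CARD('n)" for i using bij_betw_apply[OF bij] by auto
  have inj: "f i = f j \<longleftrightarrow> i = j" for i j using bij unfolding bij_betw_def inj_on_def by auto
  show ?thesis by (simp add: vec_eq_iff mat_def idm_def lt inj)
qed

lemma main_tr:
  assumes "good CARD('n::finite) u v w"
  shows "\<exists>u v w :: int^'n^'n.
           u \<in> commutators1 \<and> v \<in> commutators1 \<and> w \<in> commutators1 \<and>
           invertible (mat_commutator u v) \<and> v = v ** w"
proof -
  obtain h where h: "bij_betw h {0..<CARD('n)} (UNIV::'n set)"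
    using ex_bij_betw_nat_finite[of "UNIV::'n set"] by auto
  define f where "f = inv_into {0..<CARD('n)} h"
  have bij: "bij_betw f UNIV {..<CARD('n)}"
    unfolding f_def using bij_betw_inv_into[OF h] by (simp add: atLeast0LessThan)
  define T where "T = (\<lambda>A::nm. (\<chi> i j. A (f i) (f j)) :: int^'n^'n)"
  have M: "T A ** T B = T (mm CARD('n) A B)" for A B unfolding T_def by (rule tr_mult[OF bij])
  have Cm: "mat_commutator (T A) (T B) = T (cm CARD('n) A B)" for A B unfolding T_def by (rule tr_cm[OF bij])
  have I: "T (idm CARD('n)) = mat 1" unfolding T_def by (rule tr_id[OF bij])
  have cc: "T (cm CARD('n) x y) \<in> commutators1" for x y
    unfolding commutators1_def Cm[symmetric] by blast
  from assms obtain x1 y1 x2 y2 x3 y3 Y where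
    g: "u = cm CARD('n) x1 y1" "v = cm CARD('n) x2 y2" "w = cm CARD('n) x3 y3"
       "mm CARD('n) (cm CARD('n) u v) Y = idm CARD('n)" "mm CARD('n) Y (cm CARD('n) u v) = idm CARD('n)"
       "v = mm CARD('n) v w"
    unfolding good_def by blast
  have "invertible (mat_commutator (T u) (T v))"
    unfolding invertible_def Cm using g(4,5) M I by metis
  moreover have "T v = T v ** T w" using g(6) M by metis
  ultimately show ?thesis using cc g(1-3) by blast
qed


theorem lemma5p14:
  assumes "CARD('n::finite) \<ge> 2"
  shows "\<exists>u v w :: int^'n^'n.
           u \<in> commutators1 \<and> v \<in> commutators1 \<and> w \<in> commutators1 \<and>
           invertible (mat_commutator u v) \<and> v = v ** w"
proof -
  obtain u v w where "good CARD('n) u v w" using good_all[OF assms] by blast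
  then show ?thesis by (rule main_tr)
qed

end
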